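(* Let $k\ge 3$ and $1\le t\le k-1$ be integers. Then there exists a $t$-intersecting family $\mathcal{F}\subset\binom{[2k-t+1]}{k}$ such that $$\bigcup_{j=0}^{k-t}\binom{[2k-2t+2]}{j}\subset\mathcal{D}(\mathcal{F}).$$
   Context: $[m]=\{1,\dots,m\}$; $\binom{S}{j}$ is the family of all $j$-element subsets of $S$. For a family $\mathcal{F}$ of sets, $\mathcal{D}(\mathcal{F})=\{F\setminus F' : F,F'\in\mathcal{F}\}$. A family $\mathcal{F}$ is $t$-intersecting if $|F\cap F'|\ge t$ for all $F,F'\in\mathcal{F}$. *)

theory Defs
  imports Main
begin

definition binom_sets :: "'a set \<Rightarrow> nat \<Rightarrow> 'a set set" where
  "binom_sets S j = {A. A \<subseteq> S \<and> card A = j}"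

definition diff_family :: "'a set set \<Rightarrow> 'a set set" where
  "diff_family \<F> = {F - F' | F F'. F \<in> \<F> \<and> F' \<in> \<F>}"

definition t_intersecting :: "nat \<Rightarrow> 'a set set \<Rightarrow> bool" where
  "t_intersecting t \<F> \<longleftrightarrow> (\<forall>F\<in>\<F>. \<forall>F'\<in>\<F>. card (F \<inter> F') \<ge> t)"

end

theory Submission
  imports Defs
begin

lemma pick_two:
  assumes "finite X" "p + q \<le> card X"
  shows "\<exists>A B. A \<subseteq> X \<and> B \<subseteq> X \<and> A \<inter> B = {} \<and> card A = p \<and> card B = q"
proof -
  obtain A where A: "A \<subseteq> X" "card A = p" "finite A"
    using obtain_subset_with_card_n[of p X] assms by auto
  have "card (X - A) = card X - p" using A assms(1) by (simp add: card_Diff_subset)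
  then have "q \<le> card (X - A)" using assms by simp
  then obtain B where B: "B \<subseteq> X - A" "card B = q"
    using obtain_subset_with_card_n[of q "X - A"] by auto
  show ?thesis using A B by (intro exI[of _ A] exI[of _ B]) auto
qed

lemma odd_cover:
  fixes U W D :: "'a set"
  assumes fU: "finite U" and WU: "W \<subseteq> U" and cW: "card W = k" and cWc: "card (U - W) = k"
    and ok: "odd k" and DU: "D \<subseteq> U" and cD: "card D \<le> k - 1"
  shows "\<exists>F1 F2. F1 \<subseteq> U \<and> F2 \<subseteq> U \<and> card F1 = k \<and> card F2 = k \<and>
     odd (card (F1 \<inter> W)) \<and> odd (card (F2 \<inter> W)) \<and> F1 - F2 = D"
proof -
  have fD: "finite D" using DU fU finite_subset by blast
  have fW: "finite W" using WU fU finite_subset by blast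
  define d1 where "d1 = card (D \<inter> W)"
  define d2 where "d2 = card (D - W)"
  have cDs: "card D = d1 + d2" unfolding d1_def d2_def using card_Int_Diff[OF fD] by simp
  have k1: "k \<ge> 1" using ok by (cases k) auto
  have c1: "card (W - D) = k - d1"
    using cW fW by (simp add: card_Diff_subset_Int d1_def Int_commute)
  have c2: "card ((U - W) - D) = k - d2"
  proof -
    have "(U - W) \<inter> D = D - W" using DU by auto
    then show ?thesis using cWc fU fD card_Diff_subset_Int[of "U - W" D] d2_def by simp
  qed
  define j where "j = d1 + d2"
  define m where "m = k - j"
  define a1 where "a1 = (if even d1 then 1 else (0::nat))"
  define s where "s = (if odd d2 then d2 else d2 + 1)"
  define r1 where "r1 = s - a1"
  define a2 where "a2 = m - a1"
  define r2 where "r2 = j - r1"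
  have jk: "j \<le> k - 1" using cD cDs j_def by simp
  have ar: "a1 + r1 \<le> k - d1" "a2 + r2 \<le> k - d2" "odd (d1 + a1)" "odd (a1 + r1)"
     "a1 + a2 = m" "r1 + r2 = j"
    using jk k1 unfolding a1_def s_def r1_def a2_def r2_def m_def j_def by (auto split: if_splits)
  obtain A1 R1 where AR1: "A1 \<subseteq> W - D" "R1 \<subseteq> W - D" "A1 \<inter> R1 = {}" "card A1 = a1" "card R1 = r1"
    using pick_two[of "W - D" a1 r1] ar(1) c1 fW by auto
  obtain A2 R2 where AR2: "A2 \<subseteq> (U - W) - D" "R2 \<subseteq> (U - W) - D" "A2 \<inter> R2 = {}" "card A2 = a2" "card R2 = r2"
    using pick_two[of "(U - W) - D" a2 r2] ar(2) c2 fU by auto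
  have fin: "finite A1" "finite A2" "finite R1" "finite R2"
    using AR1 AR2 fW fU finite_subset by (meson finite_Diff)+
  define F1 where "F1 = D \<union> A1 \<union> A2"
  define F2 where "F2 = A1 \<union> A2 \<union> R1 \<union> R2"
  have "F1 \<inter> W = (D \<inter> W) \<union> A1" using AR1 AR2 unfolding F1_def by auto
  moreover have "card ((D \<inter> W) \<union> A1) = d1 + a1"
    using AR1 fin fD d1_def by (subst card_Un_disjoint) auto
  ultimately have cF1W: "card (F1 \<inter> W) = d1 + a1" by simp
  have "F2 \<inter> W = A1 \<union> R1" using AR1 AR2 unfolding F2_def by auto
  moreover have "card (A1 \<union> R1) = a1 + r1"
    using AR1 fin by (subst card_Un_disjoint) auto
  ultimately have cF2W: "card (F2 \<inter> W) = a1 + r1" by simp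
  have cF1: "card F1 = k"
  proof -
    have "card (D \<union> A1) = card D + card A1"
      using AR1 fin fD by (intro card_Un_disjoint) auto
    moreover have "card (D \<union> A1 \<union> A2) = card (D \<union> A1) + card A2"
      using AR1 AR2 fin fD by (intro card_Un_disjoint) auto
    ultimately have "card F1 = card D + card A1 + card A2" unfolding F1_def by simp
    then show ?thesis using AR1 AR2 ar cDs j_def m_def jk by simp
  qed
  have cF2: "card F2 = k"
  proof -
    have "card (A1 \<union> A2) = card A1 + card A2"
      using AR1 AR2 fin by (intro card_Un_disjoint) auto
    moreover have "card (A1 \<union> A2 \<union> R1) = card (A1 \<union> A2) + card R1"
      using AR1 AR2 fin by (intro card_Un_disjoint) auto
    moreover have "card (A1 \<union> A2 \<union> R1 \<union> R2) = card (A1 \<union> A2 \<union> R1) + card R2"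
      using AR1 AR2 fin by (intro card_Un_disjoint) auto
    ultimately have "card F2 = card A1 + card A2 + card R1 + card R2" unfolding F2_def by linarith
    then have "card F2 = m + j" using AR1(4,5) AR2(4,5) ar(5,6) by linarith
    then show ?thesis using m_def jk by linarith
  qed
  have dd: "F1 - F2 = D" using AR1 AR2 unfolding F1_def F2_def by auto
  have su: "F1 \<subseteq> U" "F2 \<subseteq> U" using AR1 AR2 DU WU unfolding F1_def F2_def by auto
  show ?thesis
    by (rule exI[of _ F1], rule exI[of _ F2]) (simp only: dd su cF1 cF2 cF1W cF2W ar(3,4) simp_thms)
qed
definition Gf :: "nat \<Rightarrow> nat \<Rightarrow> bool \<Rightarrow> bool" where
 "Gf w c z \<longleftrightarrow> (even c \<noteq> (w \<le> 1 \<and> \<not> z))"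

lemma cg_arith:
  fixes kp d1 d2 d3 d4 m :: nat
  assumes "odd kp" "kp \<ge> 3" "d1 \<le> 1" "d3 \<le> 1" "d1+d2+d3+d4 \<le> kp - 2"
    and m: "m = kp - 1 - (d1+d2+d3+d4)"
  shows "\<exists>x y ez. ez \<le> 1 \<and> x \<le> m \<and> y + ez \<le> m \<and> (ez = 1 \<longrightarrow> d3 = 0) \<and> (m - x) + y \<le> kp - 1 - d2
     \<and> x + (m - y - ez) \<le> kp - 1 - d4
     \<and> Gf (d1+d2+(m-x)) (d2+(m-x)) (d3=1) \<noteq> Gf (d1+d2+y) (d2+y) (d3=1 \<or> ez = 1)"
proof -
  have m1: "m \<ge> 1" using assms by simp
  have c2: "kp - 1 - d2 = m + d1 + d3 + d4" and c4: "kp - 1 - d4 = m + d1 + d2 + d3" using assms by auto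
  show ?thesis
  proof (cases "even m")
    case True
    show ?thesis
    proof (cases "d3 = 1")
      case True
      with \<open>even m\<close> m1 show ?thesis unfolding c2 c4
        by (intro exI[of _ 1] exI[of _ 0] exI[of _ 0]) (auto simp: Gf_def)
    next
      case d3: False
      show ?thesis
      proof (cases "d1 + d2 = 0")
        case True
        with \<open>even m\<close> m1 d3 assms(4) show ?thesis unfolding c2 c4
          by (intro exI[of _ 0] exI[of _ 0] exI[of _ 0]) (auto simp: Gf_def)
      next
        case False
        with \<open>even m\<close> m1 d3 assms(4) show ?thesis unfolding c2 c4
          by (intro exI[of _ 1] exI[of _ 0] exI[of _ 1]) (auto simp: Gf_def)
      qed
    qed
  next
    case False
    then have om: "odd m" by simp
    show ?thesis
    proof (cases "d3 = 1 \<or> d1 + d2 \<ge> 2")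
      case True
      with om m1 show ?thesis unfolding c2 c4
        by (intro exI[of _ 0] exI[of _ 0] exI[of _ 0]) (auto simp: Gf_def)
    next
      case F: False
      then have d3: "d3 = 0" using assms(4) by auto
      show ?thesis
      proof (cases "d1 + d2 = 1 \<or> m \<ge> 3")
        case True
        with om m1 d3 F show ?thesis unfolding c2 c4
          by (intro exI[of _ 0] exI[of _ 0] exI[of _ 1]) (auto simp: Gf_def)
      next
        case False
        then have "d1 = 0" "d2 = 0" using F by auto
        have "m = 1" using False om m1 by presburger
        with d3 \<open>d1 = 0\<close> \<open>d2 = 0\<close> show ?thesis unfolding c2 c4
          by (intro exI[of _ 0] exI[of _ 0] exI[of _ 0]) (auto simp: Gf_def)
      qed
    qed
  qed
qed

lemma c2_arith:
  fixes kp e1 e2 e3 e4 :: nat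
  assumes "odd kp" "kp \<ge> 3" "e1 \<le> 1" "e3 \<le> 1" "e1+e2+e3+e4 = kp" "e2 \<le> kp - 1" "e4 \<le> kp - 1"
  shows "(e1 = 1 \<and> Gf (e1+e2-1) e2 (e3=1) \<noteq> odd (e1+e2)) \<or>
         (e2 \<ge> 1 \<and> Gf (e1+e2-1) (e2-1) (e3=1) \<noteq> odd (e1+e2)) \<or>
         (e3 = 1 \<and> Gf (e1+e2) e2 False \<noteq> odd (e1+e2)) \<or>
         (e4 \<ge> 1 \<and> Gf (e1+e2) e2 (e3=1) \<noteq> odd (e1+e2))"
proof (cases "e1 = 1")
  case e1: True
  show ?thesis
  proof (cases "e2 \<ge> 2")
    case True then show ?thesis using e1 by (auto simp: Gf_def)
  next
    case False
    then consider "e2 = 0" | "e2 = 1" by linarith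
    then show ?thesis using e1 assms(4) by cases (auto simp: Gf_def)
  qed
next
  case e1: False
  then have e10: "e1 = 0" using assms(3) by simp
  show ?thesis
  proof (cases "e3 = 1")
    case e3: True
    show ?thesis
    proof (cases "e2 \<ge> 2")
      case True then show ?thesis using e10 e3 by (auto simp: Gf_def)
    next
      case False
      then consider "e2 = 0" | "e2 = 1" by linarith
      then show ?thesis using e10 e3 assms by cases (auto simp: Gf_def)
    qed
  next
    case False
    then have e30: "e3 = 0" using assms(4) by simp
    show ?thesis
    proof (cases "e2 \<ge> 2")
      case True then show ?thesis using e10 e30 assms by (auto simp: Gf_def)
    next
      case False
      then consider "e2 = 0" | "e2 = 1" by linarith
      then show ?thesis using e10 e30 assms by cases (auto simp: Gf_def)
    qed
  qed
qed

lemma card_Un_Int_disj: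
  assumes "finite A" "finite B" "A \<inter> B = {}"
  shows "card ((A \<union> B) \<inter> X) = card (A \<inter> X) + card (B \<inter> X)"
proof -
  have "(A \<union> B) \<inter> X = (A \<inter> X) \<union> (B \<inter> X)" by auto
  then show ?thesis using assms by (simp add: card_Un_disjoint disjoint_iff)
qed

lemma card_minus_one_Int:
  assumes "finite S" "y \<in> S"
  shows "card ((S - {y}) \<inter> X) = card (S \<inter> X) - (if y \<in> X then 1 else 0)"
proof -
  have "(S - {y}) \<inter> X = (S \<inter> X) - {y}" by auto
  then show ?thesis using assms by (auto simp: card_Diff_singleton_if)
qed

locale evs =
  fixes U :: "nat set" and W :: "nat set" and w0 z0 kp :: nat
  assumes finU: "finite U" and WU: "W \<subseteq> U" and w0W: "w0 \<in> W" and z0U: "z0 \<in> U"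
    and z0W: "z0 \<notin> W" and cW: "card W = kp" and cWc: "card (U - W) = kp"
    and okp: "odd kp" and kp3: "3 \<le> kp"
begin

definition R2 where "R2 = W - {w0}"
definition R4 where "R4 = U - W - {z0}"
definition g where "g S \<longleftrightarrow> Gf (card (S \<inter> W)) (card (S \<inter> R2)) (z0 \<in> S)"

lemma finW: "finite W" using WU finU finite_subset by blast

lemma cR2: "card R2 = kp - 1" unfolding R2_def using cW w0W finW by simp
lemma cR4: "card R4 = kp - 1"
proof -
  have "z0 \<in> U - W" using z0U z0W by simp
  then show ?thesis unfolding R4_def using cWc finU by simp
qed

lemma cntW:
  assumes "finite S"
  shows "card (S \<inter> W) = card (S \<inter> {w0}) + card (S \<inter> R2)"
proof -
  have "S \<inter> W = (S \<inter> {w0}) \<union> (S \<inter> R2)" using w0W unfolding R2_def by auto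
  moreover have "(S \<inter> {w0}) \<inter> (S \<inter> R2) = {}" unfolding R2_def by auto
  ultimately show ?thesis using assms by (simp add: card_Un_disjoint)
qed

lemma cntU:
  assumes "S \<subseteq> U"
  shows "card S = card (S \<inter> W) + card (S \<inter> {z0}) + card (S \<inter> R4)"
proof -
  have fS: "finite S" using assms finU finite_subset by blast
  have "S = (S \<inter> W) \<union> ((S \<inter> {z0}) \<union> (S \<inter> R4))" using assms unfolding R4_def by auto
  moreover have "card ((S \<inter> {z0}) \<union> (S \<inter> R4)) = card (S \<inter> {z0}) + card (S \<inter> R4)"
    using fS unfolding R4_def by (intro card_Un_disjoint) auto
  moreover have "card ((S \<inter> W) \<union> ((S \<inter> {z0}) \<union> (S \<inter> R4))) = card (S \<inter> W) + card ((S \<inter> {z0}) \<union> (S \<inter> R4))"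
    using fS z0W unfolding R4_def by (intro card_Un_disjoint) auto
  ultimately show ?thesis by simp
qed

lemma build:
  assumes DU: "D \<subseteq> U" and c2: "a2 + e2 \<le> card (R2 - D)" and c4: "a4 + e4 \<le> card (R4 - D)"
    and zz: "zz \<longrightarrow> z0 \<notin> D"
  shows "\<exists>A E. A \<subseteq> U - D \<and> E \<subseteq> U - D \<and> A \<inter> E = {} \<and> card A = a2 + a4 \<and>
     card E = e2 + e4 + (if zz then 1 else 0) \<and>
     card ((D \<union> A) \<inter> W) = card (D \<inter> W) + a2 \<and> card ((D \<union> A) \<inter> R2) = card (D \<inter> R2) + a2 \<and>
     (z0 \<in> D \<union> A \<longleftrightarrow> z0 \<in> D) \<and>
     card ((D \<union> E) \<inter> W) = card (D \<inter> W) + e2 \<and> card ((D \<union> E) \<inter> R2) = card (D \<inter> R2) + e2 \<and>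
     (z0 \<in> D \<union> E \<longleftrightarrow> z0 \<in> D \<or> zz)"
proof -
  have fD: "finite D" using DU finU finite_subset by blast
  have fR2: "finite (R2 - D)" and fR4: "finite (R4 - D)" unfolding R2_def R4_def using finW finU by auto
  obtain A2 E2 where P2: "A2 \<subseteq> R2 - D" "E2 \<subseteq> R2 - D" "A2 \<inter> E2 = {}" "card A2 = a2" "card E2 = e2"
    using pick_two[OF fR2 c2] by blast
  obtain A4 E4 where P4: "A4 \<subseteq> R4 - D" "E4 \<subseteq> R4 - D" "A4 \<inter> E4 = {}" "card A4 = a4" "card E4 = e4"
    using pick_two[OF fR4 c4] by blast
  have fin: "finite A2" "finite E2" "finite A4" "finite E4"
    using P2(1,2) P4(1,2) fR2 fR4 finite_subset by blast+
  define Z where "Z = (if zz then {z0} else {})"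
  have cZ: "card Z = (if zz then 1 else 0)" unfolding Z_def by simp
  define A where "A = A2 \<union> A4"
  define E where "E = E2 \<union> E4 \<union> Z"
  have R2R4: "R2 \<inter> R4 = {}" "z0 \<notin> R2" "z0 \<notin> R4" "R2 \<subseteq> W" "R4 \<inter> W = {}" "R2 \<subseteq> U" "R4 \<subseteq> U"
    unfolding R2_def R4_def using z0W WU by auto
  have sub: "A \<subseteq> U - D" "E \<subseteq> U - D" unfolding A_def E_def Z_def using P2 P4 R2R4 zz z0U by auto
  have disj: "A \<inter> E = {}" unfolding A_def E_def Z_def using P2 P4 R2R4 by auto
  have cA: "card A = a2 + a4" unfolding A_def using P2 P4 fin R2R4 by (subst card_Un_disjoint) auto
  have cE: "card E = e2 + e4 + (if zz then 1 else 0)"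
  proof -
    have "card (E2 \<union> E4) = e2 + e4" using P2 P4 fin R2R4 by (subst card_Un_disjoint) auto
    moreover have "card (E2 \<union> E4 \<union> Z) = card (E2 \<union> E4) + card Z"
      using P2 P4 fin R2R4 unfolding Z_def by (intro card_Un_disjoint) auto
    ultimately show ?thesis unfolding E_def using cZ by simp
  qed
  have AW: "(D \<union> A) \<inter> W = (D \<inter> W) \<union> A2" unfolding A_def using P2 P4 R2R4 by auto
  have AR: "(D \<union> A) \<inter> R2 = (D \<inter> R2) \<union> A2" unfolding A_def using P2 P4 R2R4 by auto
  have EW: "(D \<union> E) \<inter> W = (D \<inter> W) \<union> E2" unfolding E_def Z_def using P2 P4 R2R4 z0W by auto
  have ER: "(D \<union> E) \<inter> R2 = (D \<inter> R2) \<union> E2" unfolding E_def Z_def using P2 P4 R2R4 by auto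
  have c1: "card ((D \<union> A) \<inter> W) = card (D \<inter> W) + a2" unfolding AW
    using P2 fin fD by (subst card_Un_disjoint) auto
  have c2': "card ((D \<union> A) \<inter> R2) = card (D \<inter> R2) + a2" unfolding AR
    using P2 fin fD by (subst card_Un_disjoint) auto
  have c3: "card ((D \<union> E) \<inter> W) = card (D \<inter> W) + e2" unfolding EW
    using P2 fin fD by (subst card_Un_disjoint) auto
  have c4': "card ((D \<union> E) \<inter> R2) = card (D \<inter> R2) + e2" unfolding ER
    using P2 fin fD by (subst card_Un_disjoint) auto
  have z1: "z0 \<in> D \<union> A \<longleftrightarrow> z0 \<in> D" unfolding A_def using P2 P4 R2R4 by auto
  have z2: "z0 \<in> D \<union> E \<longleftrightarrow> z0 \<in> D \<or> zz" unfolding E_def Z_def using P2 P4 R2R4 by auto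
  show ?thesis
    by (rule exI[of _ A], rule exI[of _ E]) (simp only: sub disj cA cE c1 c2' c3 c4' z1 z2 simp_thms)
qed


lemma le1_single: "card (S \<inter> {a}) \<le> 1"
  using card_mono[of "{a}" "S \<inter> {a}"] by auto

lemma z_iff: "z0 \<in> S \<longleftrightarrow> card (S \<inter> {z0}) = 1"
  by (cases "z0 \<in> S") auto

lemma cg:
  assumes DU: "D \<subseteq> U" and cD: "card D \<le> kp - 2"
  shows "\<exists>A E. A \<subseteq> U - D \<and> E \<subseteq> U - D \<and> A \<inter> E = {} \<and> card A = kp - 1 - card D \<and>
    card E = kp - 1 - card D \<and> g (D \<union> A) \<and> \<not> g (D \<union> E)"
proof -
  have fD: "finite D" using DU finU finite_subset by blast
  define d1 where "d1 = card (D \<inter> {w0})"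
  define d2 where "d2 = card (D \<inter> R2)"
  define d3 where "d3 = card (D \<inter> {z0})"
  define d4 where "d4 = card (D \<inter> R4)"
  have d13: "d1 \<le> 1" "d3 \<le> 1" unfolding d1_def d3_def by (rule le1_single)+
  have dW: "card (D \<inter> W) = d1 + d2" unfolding d1_def d2_def using cntW[OF fD] .
  have cDs: "card D = d1 + d2 + d3 + d4" using cntU[OF DU] dW d3_def d4_def by simp
  have z3: "z0 \<in> D \<longleftrightarrow> d3 = 1" unfolding d3_def by (rule z_iff)
  have fR2: "finite R2" "finite R4" unfolding R2_def R4_def using finW finU by auto
  have cap2: "card (R2 - D) = kp - 1 - d2"
    using card_Diff_subset_Int[of R2 D] fR2 cR2 d2_def by (simp add: Int_commute)
  have cap4: "card (R4 - D) = kp - 1 - d4"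
    using card_Diff_subset_Int[of R4 D] fR2 cR4 d4_def by (simp add: Int_commute)
  define m where "m = kp - 1 - (d1+d2+d3+d4)"
  have mD: "m = kp - 1 - card D" using cDs m_def by simp
  have dsum: "d1+d2+d3+d4 \<le> kp - 2" using cD cDs by simp
  obtain x y ez where xy: "ez \<le> 1" "x \<le> m" "y + ez \<le> m" "ez = 1 \<longrightarrow> d3 = 0"
     "(m - x) + y \<le> kp - 1 - d2" "x + (m - y - ez) \<le> kp - 1 - d4"
     "Gf (d1+d2+(m-x)) (d2+(m-x)) (d3=1) \<noteq> Gf (d1+d2+y) (d2+y) (d3=1 \<or> ez = 1)"
    using cg_arith[OF okp kp3 d13(1) d13(2) dsum m_def] by blast
  have zz: "ez = 1 \<longrightarrow> z0 \<notin> D" using xy(4) z3 by simp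
  obtain A E where AE: "A \<subseteq> U - D" "E \<subseteq> U - D" "A \<inter> E = {}" "card A = (m - x) + x"
     "card E = y + (m - y - ez) + (if ez = 1 then 1 else 0)"
     "card ((D \<union> A) \<inter> W) = card (D \<inter> W) + (m - x)" "card ((D \<union> A) \<inter> R2) = card (D \<inter> R2) + (m - x)"
     "(z0 \<in> D \<union> A \<longleftrightarrow> z0 \<in> D)"
     "card ((D \<union> E) \<inter> W) = card (D \<inter> W) + y" "card ((D \<union> E) \<inter> R2) = card (D \<inter> R2) + y"
     "(z0 \<in> D \<union> E \<longleftrightarrow> z0 \<in> D \<or> ez = 1)"
    using build[OF DU, of "m - x" y x "m - y - ez" "ez = 1"] xy(5,6) cap2 cap4 zz by auto
  have cA: "card A = m" using AE(4) xy(2) by simp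
  have cE: "card E = m" using AE(5) xy(1,3) by auto
  have gA: "g (D \<union> A) = Gf (d1+d2+(m-x)) (d2+(m-x)) (d3=1)"
    unfolding g_def AE(6,7,8) dW d2_def[symmetric] z3 by simp
  have gE: "g (D \<union> E) = Gf (d1+d2+y) (d2+y) (d3=1 \<or> ez = 1)"
    unfolding g_def AE(9,10,11) dW d2_def[symmetric] z3 by simp
  have ne: "g (D \<union> A) \<noteq> g (D \<union> E)" using gA gE xy(7) by simp
  show ?thesis
  proof (cases "g (D \<union> A)")
    case True
    then show ?thesis using ne AE(1-3) cA cE mD
      by (intro exI[of _ A] exI[of _ E]) simp
  next
    case False
    then show ?thesis using ne AE(1-3) cA cE mD
      by (intro exI[of _ E] exI[of _ A]) (simp add: Int_commute)
  qed
qed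

lemma c2:
  assumes EU: "E \<subseteq> U" and cE: "card E = kp"
  shows "\<exists>y\<in>E. g (E - {y}) \<noteq> odd (card (E \<inter> W))"
proof -
  have fE: "finite E" using EU finU finite_subset by blast
  define e1 where "e1 = card (E \<inter> {w0})"
  define e2 where "e2 = card (E \<inter> R2)"
  define e3 where "e3 = card (E \<inter> {z0})"
  define e4 where "e4 = card (E \<inter> R4)"
  have e13: "e1 \<le> 1" "e3 \<le> 1" unfolding e1_def e3_def by (rule le1_single)+
  have eW: "card (E \<inter> W) = e1 + e2" unfolding e1_def e2_def using cntW[OF fE] .
  have cEs: "e1 + e2 + e3 + e4 = kp" using cntU[OF EU] eW e3_def e4_def cE by simp
  have z3: "z0 \<in> E \<longleftrightarrow> e3 = 1" unfolding e3_def by (rule z_iff)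
  have fR2: "finite R2" "finite R4" unfolding R2_def R4_def using finW finU by auto
  have e2le: "e2 \<le> kp - 1" unfolding e2_def using card_mono[OF fR2(1), of "E \<inter> R2"] cR2 by auto
  have e4le: "e4 \<le> kp - 1" unfolding e4_def using card_mono[OF fR2(2), of "E \<inter> R4"] cR4 by auto
  have w0R: "w0 \<notin> R2" "w0 \<notin> R4" "z0 \<notin> R2" "z0 \<notin> R4" "w0 \<noteq> z0"
    unfolding R2_def R4_def using w0W z0W by auto
  have R2W: "R2 \<subseteq> W" "R4 \<inter> W = {}" unfolding R2_def R4_def by auto
  from c2_arith[OF okp kp3 e13(1) e13(2) cEs e2le e4le]
  consider (a) "e1 = 1" "Gf (e1+e2-1) e2 (e3=1) \<noteq> odd (e1+e2)"
    | (b) "e2 \<ge> 1" "Gf (e1+e2-1) (e2-1) (e3=1) \<noteq> odd (e1+e2)"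
    | (c) "e3 = 1" "Gf (e1+e2) e2 False \<noteq> odd (e1+e2)"
    | (d) "e4 \<ge> 1" "Gf (e1+e2) e2 (e3=1) \<noteq> odd (e1+e2)" by blast
  then show ?thesis
  proof cases
    case a
    then have y: "w0 \<in> E" unfolding e1_def by (cases "w0 \<in> E") auto
    have "g (E - {w0}) = Gf (e1+e2-1) e2 (e3=1)" unfolding g_def
      using card_minus_one_Int[OF fE y, of W] card_minus_one_Int[OF fE y, of R2] w0W w0R eW e2_def z3
      by simp
    then show ?thesis using a y eW by auto
  next
    case b
    then have "E \<inter> R2 \<noteq> {}" unfolding e2_def by auto
    then obtain y where y: "y \<in> E" "y \<in> R2" by auto
    have yz: "y \<noteq> z0" using y w0R by auto
    have "g (E - {y}) = Gf (e1+e2-1) (e2-1) (e3=1)" unfolding g_def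
      using card_minus_one_Int[OF fE y(1), of W] card_minus_one_Int[OF fE y(1), of R2] y R2W eW e2_def z3 yz
      by auto
    then show ?thesis using b y eW by auto
  next
    case c
    then have y: "z0 \<in> E" using z3 by simp
    have "g (E - {z0}) = Gf (e1+e2) e2 False" unfolding g_def
      using card_minus_one_Int[OF fE y, of W] card_minus_one_Int[OF fE y, of R2] z0W w0R eW e2_def
      by simp
    then show ?thesis using c y eW by auto
  next
    case d
    then have "E \<inter> R4 \<noteq> {}" unfolding e4_def by auto
    then obtain y where y: "y \<in> E" "y \<in> R4" by auto
    have yz: "y \<noteq> z0" "y \<notin> W" "y \<notin> R2" using y w0R R2W R2W(1) by auto
    have "g (E - {y}) = Gf (e1+e2) e2 (e3=1)" unfolding g_def
      using card_minus_one_Int[OF fE y(1), of W] card_minus_one_Int[OF fE y(1), of R2] yz eW e2_def z3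
      by auto
    then show ?thesis using d y eW by auto
  qed
qed

end


definition gg :: "nat \<Rightarrow> nat set \<Rightarrow> bool" where
  "gg kp S \<longleftrightarrow> Gf (card (S \<inter> {1..kp})) (card (S \<inter> {2..kp})) (kp + 1 \<in> S)"

lemma evs_inst:
  assumes "odd kp" "3 \<le> kp"
  shows "evs {1..2*kp} {1..kp} 1 (kp+1) kp"
proof -
  have "{1..2*kp} - {1..kp} = {kp+1..2*kp}" by auto
  then have "card ({1..2*kp} - {1..kp}) = kp" by simp
  then show ?thesis using assms by unfold_locales auto
qed

lemma g_gg:
  assumes "odd kp" "3 \<le> kp"
  shows "evs.g {1..kp} 1 (kp+1) S = gg kp S"
proof -
  interpret E: evs "{1..2*kp}" "{1..kp}" 1 "kp+1" kp using evs_inst[OF assms] .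
  have "E.R2 = {2..kp}" unfolding E.R2_def by auto
  then show ?thesis unfolding E.g_def gg_def by simp
qed

lemma cg_gg:
  assumes "odd kp" "3 \<le> kp" "D \<subseteq> {1..2*kp}" "card D \<le> kp - 2"
  shows "\<exists>A E. A \<subseteq> {1..2*kp} - D \<and> E \<subseteq> {1..2*kp} - D \<and> A \<inter> E = {} \<and> card A = kp - 1 - card D \<and>
    card E = kp - 1 - card D \<and> gg kp (D \<union> A) \<and> \<not> gg kp (D \<union> E)"
proof -
  interpret E: evs "{1..2*kp}" "{1..kp}" 1 "kp+1" kp using evs_inst[OF assms(1,2)] .
  show ?thesis using E.cg[OF assms(3,4)] g_gg[OF assms(1,2)] by simp
qed

lemma c2_gg:
  assumes "odd kp" "3 \<le> kp" "E \<subseteq> {1..2*kp}" "card E = kp"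
  shows "\<exists>y\<in>E. gg kp (E - {y}) \<noteq> odd (card (E \<inter> {1..kp}))"
proof -
  interpret Ev: evs "{1..2*kp}" "{1..kp}" 1 "kp+1" kp using evs_inst[OF assms(1,2)] .
  show ?thesis using Ev.c2[OF assms(3,4)] g_gg[OF assms(1,2)] by simp
qed


definition redE :: "nat \<Rightarrow> nat set \<Rightarrow> bool" where
  "redE kp F \<longleftrightarrow> (if card (F \<inter> {2*kp+1, 2*kp+2}) = 1 then odd (card (F \<inter> {1..kp}))
     else if card (F \<inter> {2*kp+1, 2*kp+2}) = 2 then gg kp (F \<inter> {1..2*kp})
     else \<not> gg kp ({1..2*kp} - F))"

lemma compl_eq:
  assumes "finite U" "F \<subseteq> U" "F' \<subseteq> U" "F \<inter> F' = {}" "card F + card F' = card U"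
  shows "F' = U - F"
proof -
  have fF: "finite F" "finite F'" using assms finite_subset by blast+
  have "card (F \<union> F') = card U" using assms fF by (simp add: card_Un_disjoint)
  then have "F \<union> F' = U" using assms by (metis Un_subset_iff card_subset_eq)
  then show ?thesis using assms(4) by auto
qed

lemma even_inter:
  assumes ok: "odd kp" "3 \<le> kp"
    and F: "F \<subseteq> {1..2*kp+2}" "card F = kp + 1" "redE kp F"
    and F': "F' \<subseteq> {1..2*kp+2}" "card F' = kp + 1" "redE kp F'"
  shows "F \<inter> F' \<noteq> {}"
proof
  assume disj: "F \<inter> F' = {}"
  define U where "U = {1..2*kp+2}"
  define P where "P = {2*kp+1, 2*kp+2}"
  define W where "W = {1..kp}"
  define U' where "U' = {1..2*kp}"
  have cU: "card U = (kp+1) + (kp+1)" unfolding U_def by simp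
  have F'eq: "F' = U - F" using compl_eq[of U F F'] F F' disj cU unfolding U_def by simp
  have fF: "finite F" using F(1) finite_subset by blast
  have PU: "P \<subseteq> U" "W \<subseteq> U" "U' \<subseteq> U" unfolding P_def U_def W_def U'_def by auto
  have cP: "card (F' \<inter> P) = 2 - card (F \<inter> P)"
  proof -
    have "F' \<inter> P = P - F" using F'eq PU by auto
    moreover have "card P = 2" unfolding P_def by simp
    ultimately show ?thesis using card_Diff_subset_Int[of P F] unfolding P_def by (simp add: Int_commute)
  qed
  have cPle: "card (F \<inter> P) \<le> 2" using card_mono[of P "F \<inter> P"] unfolding P_def by auto
  have cW: "card (F' \<inter> W) = kp - card (F \<inter> W)"
  proof -
    have "F' \<inter> W = W - F" using F'eq PU by auto
    then show ?thesis using card_Diff_subset_Int[of W F] unfolding W_def by (simp add: Int_commute)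
  qed
  have cWle: "card (F \<inter> W) \<le> kp" using card_mono[of W "F \<inter> W"] unfolding W_def by auto
  have U1: "U' - F' = F \<inter> U'" using F'eq PU by auto
  have U2: "F' \<inter> U' = U' - F" using F'eq PU by auto
  have rF: "redE kp F" and rF': "redE kp F'" using F F' by auto
  have PP: "{2*kp+1, 2*kp+2} = P" "{1..kp} = W" "{1..2*kp} = U'" unfolding P_def W_def U'_def by auto
  consider "card (F \<inter> P) = 0" | "card (F \<inter> P) = 1" | "card (F \<inter> P) = 2" using cPle by linarith
  then show False
  proof cases
    case 1
    then show ?thesis using rF rF' cP U2 unfolding redE_def PP by (simp add: Int_commute)
  next
    case 2
    then have "odd (card (F \<inter> W))" "odd (card (F' \<inter> W))" using rF rF' cP unfolding redE_def PP by auto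
    then show ?thesis using cW cWle ok(1) by presburger
  next
    case 3
    then show ?thesis using rF rF' cP U1 unfolding redE_def PP by (simp add: Int_commute)
  qed
qed


lemma sep_red:
  assumes "F' \<subseteq> {1..2*kp}" "x \<in> {2*kp+1, 2*kp+2}"
  shows "redE kp (F' \<union> {x}) = odd (card (F' \<inter> {1..kp}))"
    and "card (F' \<union> {x}) = card F' + 1"
proof -
  have fF: "finite F'" using assms(1) finite_subset by blast
  have xn: "x \<notin> F'" using assms by auto
  have "(F' \<union> {x}) \<inter> {2*kp+1, 2*kp+2} = {x}" using assms by auto
  moreover have "(F' \<union> {x}) \<inter> {1..kp} = F' \<inter> {1..kp}" using assms by auto
  ultimately show "redE kp (F' \<union> {x}) = odd (card (F' \<inter> {1..kp}))" unfolding redE_def by simp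
  show "card (F' \<union> {x}) = card F' + 1" using fF xn by simp
qed

lemma odd_cover_U':
  assumes "odd kp" "D \<subseteq> {1..2*kp}" "card D \<le> kp - 1"
  shows "\<exists>F1 F2. F1 \<subseteq> {1..2*kp} \<and> F2 \<subseteq> {1..2*kp} \<and> card F1 = kp \<and> card F2 = kp \<and>
     odd (card (F1 \<inter> {1..kp})) \<and> odd (card (F2 \<inter> {1..kp})) \<and> F1 - F2 = D"
proof -
  have "{1..2*kp} - {1..kp} = {kp+1..2*kp}" by auto
  then have "card ({1..2*kp} - {1..kp}) = kp" by simp
  then show ?thesis using odd_cover[of "{1..2*kp}" "{1..kp}" kp D] assms by auto
qed

lemma even_cover:
  assumes ok: "odd kp" "3 \<le> kp" and DU: "D \<subseteq> {1..2*kp+2}" and cD: "card D \<le> kp"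
  shows "\<exists>F1 F2. F1 \<subseteq> {1..2*kp+2} \<and> F2 \<subseteq> {1..2*kp+2} \<and> card F1 = kp+1 \<and> card F2 = kp+1 \<and>
     redE kp F1 \<and> redE kp F2 \<and> F1 - F2 = D"
proof -
  define a where "a = 2*kp+1"
  define b where "b = 2*kp+2"
  define P where "P = {a, b}"
  define U' where "U' = {1..2*kp}"
  define W where "W = {1..kp}"
  have Ueq: "{1..2*kp+2} = U' \<union> P" unfolding U'_def P_def a_def b_def by auto
  have UP: "U' \<inter> P = {}" "a \<noteq> b" "a \<notin> U'" "b \<notin> U'" unfolding U'_def P_def a_def b_def by auto
  have fD: "finite D" using DU finite_subset by blast
  have fU': "finite U'" unfolding U'_def by simp
  have cU': "card U' = 2*kp" unfolding U'_def by simp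
  have WU': "W \<subseteq> U'" "card W = kp" unfolding W_def U'_def by auto
  have cPle: "card (D \<inter> P) \<le> 2" using card_mono[of P "D \<inter> P"] UP(2) unfolding P_def by auto
  have Pa: "P = {2*kp+1, 2*kp+2}" unfolding P_def a_def b_def by simp
  consider "D \<inter> P = {} \<and> card D \<le> kp - 1" | "D \<inter> P = {} \<and> card D = kp" | "card (D \<inter> P) = 1" | "P \<subseteq> D"
  proof -
    have "card (D \<inter> P) = 0 \<or> card (D \<inter> P) = 1 \<or> card (D \<inter> P) = 2" using cPle by linarith
    moreover have "card (D \<inter> P) = 0 \<Longrightarrow> D \<inter> P = {}" using fD by simp
    moreover have "card (D \<inter> P) = 2 \<Longrightarrow> P \<subseteq> D"
    proof -
      assume c2: "card (D \<inter> P) = 2"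
      have "card P = 2" unfolding P_def using UP by simp
      then have "D \<inter> P = P" using card_subset_eq[of P "D \<inter> P"] c2 unfolding P_def by auto
      then show ?thesis by auto
    qed
    ultimately show ?thesis using that cD by force
  qed
  then show ?thesis
  proof cases
    case 1
    then have DU': "D \<subseteq> U'" using DU Ueq by auto
    obtain F1 F2 where FF: "F1 \<subseteq> U'" "F2 \<subseteq> U'" "card F1 = kp" "card F2 = kp"
      "odd (card (F1 \<inter> W))" "odd (card (F2 \<inter> W))" "F1 - F2 = D"
      using odd_cover_U'[OF ok(1), of D] DU' 1 unfolding U'_def W_def by blast
    have aP: "a \<in> {2*kp+1, 2*kp+2}" unfolding a_def by simp
    have r: "redE kp (F1 \<union> {a})" "redE kp (F2 \<union> {a})"
      using sep_red(1)[OF _ aP] FF unfolding U'_def W_def by auto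
    have c: "card (F1 \<union> {a}) = kp+1" "card (F2 \<union> {a}) = kp+1"
      using sep_red(2)[OF _ aP] FF unfolding U'_def by auto
    have d: "(F1 \<union> {a}) - (F2 \<union> {a}) = D" using FF(7) DU' UP by auto
    have s: "F1 \<union> {a} \<subseteq> {1..2*kp+2}" "F2 \<union> {a} \<subseteq> {1..2*kp+2}" using FF Ueq unfolding P_def by auto
    show ?thesis using r c d s by blast
  next
    case 3
    then obtain x where x: "D \<inter> P = {x}" using card_1_singletonE by blast
    define y where "y = (if x = a then b else a)"
    have xy: "x \<in> P" "y \<in> P" "x \<noteq> y" "y \<notin> D" using x UP unfolding y_def P_def by auto
    define D' where "D' = D - {x}"
    have DU': "D' \<subseteq> U'" using DU Ueq x unfolding D'_def by auto
    have xD: "x \<in> D" using x by auto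
    have cD': "card D' \<le> kp - 1" using cD xD fD unfolding D'_def by (simp add: card_Diff_singleton)
    obtain F1 F2 where FF: "F1 \<subseteq> U'" "F2 \<subseteq> U'" "card F1 = kp" "card F2 = kp"
      "odd (card (F1 \<inter> W))" "odd (card (F2 \<inter> W))" "F1 - F2 = D'"
      using odd_cover_U'[OF ok(1), of D'] DU' cD' unfolding U'_def W_def by blast
    have xP: "x \<in> {2*kp+1, 2*kp+2}" "y \<in> {2*kp+1, 2*kp+2}" using xy Pa by auto
    have r: "redE kp (F1 \<union> {x})" "redE kp (F2 \<union> {y})"
      using sep_red(1)[OF _ xP(1)] sep_red(1)[OF _ xP(2)] FF unfolding U'_def W_def by auto
    have c: "card (F1 \<union> {x}) = kp+1" "card (F2 \<union> {y}) = kp+1"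
      using sep_red(2)[OF _ xP(1)] sep_red(2)[OF _ xP(2)] FF unfolding U'_def by auto
    have xnF2: "x \<notin> F2" using FF(2) xy UP unfolding P_def by auto
    have d: "(F1 \<union> {x}) - (F2 \<union> {y}) = D" using FF(7) xy xnF2 x unfolding D'_def by auto
    have s: "F1 \<union> {x} \<subseteq> {1..2*kp+2}" "F2 \<union> {y} \<subseteq> {1..2*kp+2}" using FF Ueq xy by auto
    show ?thesis using r c d s by blast
  next
    case 4
    define D' where "D' = D - P"
    have DU': "D' \<subseteq> U'" using DU Ueq unfolding D'_def by auto
    have cDD: "card D = card D' + 2"
    proof -
      have "card D = card D' + card P" unfolding D'_def using 4 fD card_Diff_subset[of P D]
        by (metis P_def card_mono finite.emptyI finite.insertI le_add_diff_inverse2)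
      then show ?thesis unfolding P_def using UP by simp
    qed
    have cD': "card D' \<le> kp - 2" using cD cDD by simp
    obtain A E where AE: "A \<subseteq> U' - D'" "E \<subseteq> U' - D'" "A \<inter> E = {}" "card A = kp - 1 - card D'"
      "card E = kp - 1 - card D'" "gg kp (D' \<union> A)" "\<not> gg kp (D' \<union> E)"
      using cg_gg[OF ok DU'[unfolded U'_def] cD'] unfolding U'_def by blast
    have fAE: "finite A" "finite E" "finite D'" using AE(1,2) DU' fU' finite_subset by blast+
    define F1 where "F1 = D \<union> A"
    define F2 where "F2 = U' - (D' \<union> E)"
    have F1P: "F1 \<inter> P = P" using 4 unfolding F1_def by auto
    have F1U': "F1 \<inter> U' = D' \<union> A" unfolding F1_def D'_def using AE(1) UP DU Ueq by auto
    have r1: "redE kp F1" unfolding redE_def Pa[symmetric] F1P U'_def[symmetric] F1U'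
      using AE(6) UP by (simp add: P_def)
    have F2P: "F2 \<inter> P = {}" unfolding F2_def using UP by auto
    have F2U': "U' - F2 = D' \<union> E" unfolding F2_def using DU' AE(2) by auto
    have r2: "redE kp F2" unfolding redE_def Pa[symmetric] F2P U'_def[symmetric] F2U'
      using AE(7) by simp
    have c1: "card F1 = kp + 1"
    proof -
      have "card F1 = card D + card A" unfolding F1_def using fD fAE AE(1) 4 UP(1)
        by (intro card_Un_disjoint) (auto simp: D'_def)
      then show ?thesis using AE(4) cDD cD' ok by simp
    qed
    have c2: "card F2 = kp + 1"
    proof -
      have "card (D' \<union> E) = card D' + card E" using fAE AE(2) by (intro card_Un_disjoint) auto
      moreover have "card F2 = card U' - card (D' \<union> E)" unfolding F2_def
        using DU' AE(2) fU' by (intro card_Diff_subset) (auto intro: finite_subset)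
      ultimately show ?thesis using cU' AE(5) cD' ok by simp
    qed
    have d: "F1 - F2 = D" unfolding F1_def F2_def D'_def using AE(1,2,3) 4 UP DU by auto
    have s: "F1 \<subseteq> {1..2*kp+2}" "F2 \<subseteq> {1..2*kp+2}" unfolding F1_def F2_def using DU AE(1) Ueq by auto
    show ?thesis using r1 r2 c1 c2 d s by blast
  next
    case 2
    then have DU': "D \<subseteq> U'" using DU Ueq by auto
    define E where "E = U' - D"
    have cE: "card E = kp" unfolding E_def using card_Diff_subset[OF fD DU'] cU' 2 by simp
    have EU': "E \<subseteq> U'" unfolding E_def by auto
    obtain y where y: "y \<in> E" "gg kp (E - {y}) \<noteq> odd (card (E \<inter> W))"
      using c2_gg[OF ok EU'[unfolded U'_def] cE] unfolding U'_def W_def by blast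
    have fE: "finite E" using EU' fU' finite_subset by blast
    have cDW: "card (D \<inter> W) = kp - card (E \<inter> W)"
    proof -
      have "E \<inter> W = W - D" unfolding E_def using WU' by auto
      then have "card (E \<inter> W) = kp - card (D \<inter> W)"
        using card_Diff_subset_Int[of W D] WU' unfolding W_def by (simp add: Int_commute)
      moreover have "card (D \<inter> W) \<le> kp" using card_mono[of W "D \<inter> W"] WU' unfolding W_def by auto
      ultimately show ?thesis by simp
    qed
    have cEW: "card (E \<inter> W) \<le> kp" using card_mono[of W "E \<inter> W"] WU' unfolding W_def by auto
    show ?thesis
    proof (cases "odd (card (E \<inter> W))")
      case True
      define F1 where "F1 = D \<union> {y}"
      define F2 where "F2 = E \<union> {b}"
      have F1P: "F1 \<inter> P = {}" unfolding F1_def using DU' EU' y UP by auto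
      have F1U: "U' - F1 = E - {y}" unfolding F1_def E_def by auto
      have r1: "redE kp F1" unfolding redE_def Pa[symmetric] F1P U'_def[symmetric] F1U
        using y True by simp
      have bP: "b \<in> {2*kp+1, 2*kp+2}" unfolding b_def by simp
      have r2: "redE kp F2" unfolding F2_def using sep_red(1)[OF _ bP, of E] EU' True
        unfolding U'_def W_def by simp
      have yD: "y \<notin> D" using y unfolding E_def by auto
      have c1: "card F1 = kp + 1" unfolding F1_def using fD yD 2 by simp
      have c2: "card F2 = kp + 1" unfolding F2_def using sep_red(2)[OF _ bP, of E] EU' cE
        unfolding U'_def by simp
      have d: "F1 - F2 = D" unfolding F1_def F2_def E_def using y UP DU' by (auto simp: E_def)
      have s: "F1 \<subseteq> {1..2*kp+2}" "F2 \<subseteq> {1..2*kp+2}" unfolding F1_def F2_def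
        using DU' EU' y Ueq unfolding P_def by auto
      show ?thesis using r1 r2 c1 c2 d s by blast
    next
      case False
      define F1 where "F1 = D \<union> {a}"
      define F2 where "F2 = (E - {y}) \<union> P"
      have aP: "a \<in> {2*kp+1, 2*kp+2}" unfolding a_def by simp
      have "odd (card (D \<inter> W))" using cDW cEW False ok(1) by presburger
      then have r1: "redE kp F1" unfolding F1_def using sep_red(1)[OF _ aP, of D] DU'
        unfolding U'_def W_def by simp
      have F2P: "F2 \<inter> P = P" unfolding F2_def by auto
      have F2U: "F2 \<inter> U' = E - {y}" unfolding F2_def using EU' UP by auto
      have r2: "redE kp F2" unfolding redE_def Pa[symmetric] F2P U'_def[symmetric] F2U
        using y False UP by (simp add: P_def)
      have c1: "card F1 = kp + 1" unfolding F1_def using sep_red(2)[OF _ aP, of D] DU' 2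
        unfolding U'_def by simp
      have c2: "card F2 = kp + 1"
      proof -
        have "card (E - {y}) = kp - 1" using cE y fE by simp
        moreover have "card ((E - {y}) \<union> P) = card (E - {y}) + card P"
          using fE EU' UP unfolding P_def by (intro card_Un_disjoint) auto
        moreover have "card P = 2" unfolding P_def using UP by simp
        ultimately show ?thesis unfolding F2_def using ok by simp
      qed
      have d: "F1 - F2 = D" unfolding F1_def F2_def E_def P_def using UP DU' by auto
      have s: "F1 \<subseteq> {1..2*kp+2}" "F2 \<subseteq> {1..2*kp+2}" unfolding F1_def F2_def
        using DU' EU' Ueq unfolding P_def by auto
      show ?thesis using r1 r2 c1 c2 d s by blast
    qed
  qed
qed


lemma case_t2:
  fixes k t :: nat
  assumes "k \<ge> 3" and "2 \<le> t" and "t \<le> k - 1"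
  shows "\<exists>\<F>. \<F> \<subseteq> binom_sets {1..2*k - t + 1} k \<and> t_intersecting t \<F> \<and>
           (\<Union>j\<in>{0..k - t}. binom_sets {1..2*k - 2*t + 2} j) \<subseteq> diff_family \<F>"
proof -
  define V where "V = {1..2*k - t}"
  define Fam where "Fam = binom_sets V k"
  have fV: "finite V" and cV: "card V = 2*k - t" unfolding V_def by auto
  have s1: "Fam \<subseteq> binom_sets {1..2*k - t + 1} k" unfolding Fam_def binom_sets_def V_def by auto
  have s2: "t_intersecting t Fam" unfolding t_intersecting_def
  proof (intro ballI)
    fix F F' assume F: "F \<in> Fam" and F': "F' \<in> Fam"
    have FV: "F \<subseteq> V" "card F = k" "F' \<subseteq> V" "card F' = k" using F F' unfolding Fam_def binom_sets_def by auto
    have fF: "finite F" "finite F'" using FV fV finite_subset by blast+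
    have "card (F \<union> F') + card (F \<inter> F') = card F + card F'" using card_Un_Int[OF fF] by simp
    moreover have "card (F \<union> F') \<le> 2*k - t" using card_mono[OF fV, of "F \<union> F'"] FV cV by auto
    ultimately show "card (F \<inter> F') \<ge> t" using FV assms by linarith
  qed
  have s3: "(\<Union>j\<in>{0..k - t}. binom_sets {1..2*k - 2*t + 2} j) \<subseteq> diff_family Fam"
  proof
    fix D assume "D \<in> (\<Union>j\<in>{0..k - t}. binom_sets {1..2*k - 2*t + 2} j)"
    then obtain j where j: "j \<le> k - t" "D \<subseteq> {1..2*k - 2*t + 2}" "card D = j"
      unfolding binom_sets_def by auto
    have "{1..2*k - 2*t + 2} \<subseteq> V" using assms unfolding V_def by auto
    then have DV: "D \<subseteq> V" using j(2) by blast
    have fD: "finite D" using DV fV finite_subset by blast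
    have cVD: "card (V - D) = 2*k - t - j" using card_Diff_subset[OF fD DV] cV j(3) by simp
    have "(k - j) + j \<le> card (V - D)" using cVD j assms by simp
    then obtain A R where AR: "A \<subseteq> V - D" "R \<subseteq> V - D" "A \<inter> R = {}" "card A = k - j" "card R = j"
      using pick_two[of "V - D" "k - j" j] fV by auto
    have fAR: "finite A" "finite R" using AR fV finite_subset by (meson finite_Diff)+
    have c1: "card (D \<union> A) = k" using AR fD fAR j assms by (subst card_Un_disjoint) auto
    have c2: "card (A \<union> R) = k" using AR fAR j assms by (subst card_Un_disjoint) auto
    have m1: "D \<union> A \<in> Fam" "A \<union> R \<in> Fam" unfolding Fam_def binom_sets_def using c1 c2 DV AR by auto
    have "D = (D \<union> A) - (A \<union> R)" using AR by auto
    then show "D \<in> diff_family Fam" unfolding diff_family_def using m1 by blast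
  qed
  show ?thesis using s1 s2 s3 by blast
qed

lemma case_odd:
  fixes k :: nat
  assumes "k \<ge> 3" and "odd k"
  shows "\<exists>\<F>. \<F> \<subseteq> binom_sets {1..2*k} k \<and> t_intersecting 1 \<F> \<and>
           (\<Union>j\<in>{0..k - 1}. binom_sets {1..2*k} j) \<subseteq> diff_family \<F>"
proof -
  define U where "U = {1..2*k}"
  define W where "W = {1..k}"
  define Fam where "Fam = {F \<in> binom_sets U k. odd (card (F \<inter> W))}"
  have fU: "finite U" and cU: "card U = k + k" unfolding U_def by auto
  have WU: "W \<subseteq> U" "card W = k" unfolding W_def U_def by auto
  have cWc: "card (U - W) = k"
  proof -
    have "U - W = {k+1..2*k}" unfolding U_def W_def by auto
    then show ?thesis by simp
  qed
  have s1: "Fam \<subseteq> binom_sets U k" unfolding Fam_def by auto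
  have s2: "t_intersecting 1 Fam" unfolding t_intersecting_def
  proof (intro ballI)
    fix F F' assume F: "F \<in> Fam" and F': "F' \<in> Fam"
    have FV: "F \<subseteq> U" "card F = k" "F' \<subseteq> U" "card F' = k" "odd (card (F \<inter> W))" "odd (card (F' \<inter> W))"
      using F F' unfolding Fam_def binom_sets_def by auto
    have fF: "finite F" "finite F'" using FV fU finite_subset by blast+
    show "card (F \<inter> F') \<ge> 1"
    proof (rule ccontr)
      assume "\<not> card (F \<inter> F') \<ge> 1"
      then have "card (F \<inter> F') = 0" by simp
      then have "F \<inter> F' = {}" using fF by simp
      then have eq: "F' = U - F" using compl_eq[OF fU FV(1) FV(3)] FV cU by simp
      have "F' \<inter> W = W - F" using eq WU by auto
      then have "card (F' \<inter> W) = k - card (F \<inter> W)"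
        using card_Diff_subset_Int[of W F] WU fF(1) by (simp add: Int_commute)
      moreover have "card (F \<inter> W) \<le> k" using card_mono[of W "F \<inter> W"] WU fU finite_subset by auto
      ultimately show False using FV(5,6) assms(2) by presburger
    qed
  qed
  have s3: "(\<Union>j\<in>{0..k - 1}. binom_sets U j) \<subseteq> diff_family Fam"
  proof
    fix D assume "D \<in> (\<Union>j\<in>{0..k - 1}. binom_sets U j)"
    then have D: "D \<subseteq> U" "card D \<le> k - 1" unfolding binom_sets_def by auto
    obtain F1 F2 where FF: "F1 \<subseteq> U" "F2 \<subseteq> U" "card F1 = k" "card F2 = k"
       "odd (card (F1 \<inter> W))" "odd (card (F2 \<inter> W))" "F1 - F2 = D"
      using odd_cover[OF fU WU(1) WU(2) cWc assms(2) D] by blast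
    have "F1 \<in> Fam" "F2 \<in> Fam" unfolding Fam_def binom_sets_def using FF by auto
    then show "D \<in> diff_family Fam" unfolding diff_family_def using FF(7) by blast
  qed
  show ?thesis using s1 s2 s3 unfolding U_def by blast
qed

lemma case_even:
  fixes k :: nat
  assumes "k \<ge> 3" and "even k"
  shows "\<exists>\<F>. \<F> \<subseteq> binom_sets {1..2*k} k \<and> t_intersecting 1 \<F> \<and>
           (\<Union>j\<in>{0..k - 1}. binom_sets {1..2*k} j) \<subseteq> diff_family \<F>"
proof -
  define kp where "kp = k - 1"
  have k4: "k \<ge> 4" using assms by presburger
  have ok: "odd kp" "3 \<le> kp" using assms k4 unfolding kp_def by auto
  have kk: "k = kp + 1" "2*k = 2*kp+2" using assms unfolding kp_def by auto
  define Fam where "Fam = {F \<in> binom_sets {1..2*k} k. redE kp F}"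
  have s1: "Fam \<subseteq> binom_sets {1..2*k} k" unfolding Fam_def by auto
  have s2: "t_intersecting 1 Fam" unfolding t_intersecting_def
  proof (intro ballI)
    fix F F' assume F: "F \<in> Fam" and F': "F' \<in> Fam"
    have FV: "F \<subseteq> {1..2*kp+2}" "card F = kp+1" "F' \<subseteq> {1..2*kp+2}" "card F' = kp+1" "redE kp F" "redE kp F'"
      using F F' kk unfolding Fam_def binom_sets_def by auto
    have "F \<inter> F' \<noteq> {}" using even_inter[OF ok FV(1,2,5,3,4,6)] .
    moreover have "finite (F \<inter> F')" using FV(1) finite_subset by blast
    ultimately show "card (F \<inter> F') \<ge> 1" by (simp add: Suc_le_eq card_gt_0_iff)
  qed
  have s3: "(\<Union>j\<in>{0..k - 1}. binom_sets {1..2*k} j) \<subseteq> diff_family Fam"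
  proof
    fix D assume "D \<in> (\<Union>j\<in>{0..k - 1}. binom_sets {1..2*k} j)"
    then have D: "D \<subseteq> {1..2*kp+2}" "card D \<le> kp" unfolding binom_sets_def kk by auto
    obtain F1 F2 where FF: "F1 \<subseteq> {1..2*kp+2}" "F2 \<subseteq> {1..2*kp+2}" "card F1 = kp+1" "card F2 = kp+1"
       "redE kp F1" "redE kp F2" "F1 - F2 = D"
      using even_cover[OF ok D] by blast
    have "F1 \<in> Fam" "F2 \<in> Fam" unfolding Fam_def binom_sets_def using FF kk by auto
    then show "D \<in> diff_family Fam" unfolding diff_family_def using FF(7) by blast
  qed
  show ?thesis using s1 s2 s3 by blast
qed

lemma case_t1:
  fixes k :: nat
  assumes "k \<ge> 3"
  shows "\<exists>\<F>. \<F> \<subseteq> binom_sets {1..2*k - 1 + 1} k \<and> t_intersecting 1 \<F> \<and>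
           (\<Union>j\<in>{0..k - 1}. binom_sets {1..2*k - 2*1 + 2} j) \<subseteq> diff_family \<F>"
proof -
  have e: "2*k - 1 + 1 = 2*k" "2*k - 2*1 + 2 = 2*k" using assms by auto
  show ?thesis unfolding e
  proof (cases "odd k")
    case True
    show "\<exists>\<F>. \<F> \<subseteq> binom_sets {1..2*k} k \<and> t_intersecting 1 \<F> \<and>
           (\<Union>j\<in>{0..k - 1}. binom_sets {1..2*k} j) \<subseteq> diff_family \<F>"
      using case_odd[OF assms True] .
  next
    case False
    then have "even k" by simp
    show "\<exists>\<F>. \<F> \<subseteq> binom_sets {1..2*k} k \<and> t_intersecting 1 \<F> \<and>
           (\<Union>j\<in>{0..k - 1}. binom_sets {1..2*k} j) \<subseteq> diff_family \<F>"
      using case_even[OF assms \<open>even k\<close>] .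
  qed
qed

theorem corollary1:
  fixes k t :: nat
  assumes "k \<ge> 3" and "1 \<le> t" and "t \<le> k - 1"
  shows "\<exists>\<F>. \<F> \<subseteq> binom_sets {1..2*k - t + 1} k \<and> t_intersecting t \<F> \<and>
           (\<Union>j\<in>{0..k - t}. binom_sets {1..2*k - 2*t + 2} j) \<subseteq> diff_family \<F>"
proof (cases "t \<ge> 2")
  case True
  show ?thesis using case_t2[OF assms(1) True assms(3)] .
next
  case False
  then have t1: "t = 1" using assms(2) by simp
  show ?thesis unfolding t1 using case_t1[OF assms(1)] .
qed

end
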